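(* Let $\mathcal{P}\subset\mathbb{R}^d$ be finite, $r>0$, and let $\eta$ be a singular $k$-cycle in $\mathcal{U}(\mathcal{P},r)$ with filling radius $R_{fill}(\eta)=R$. Then $\eta_{death}\le R+r$.
   Context: $\mathcal{U}(\mathcal{P},r)=\bigcup_{p\in\mathcal{P}}B_r(p)$ (closed Euclidean balls); for a set $X$ (e.g. the image of a chain), $\mathcal{U}(X,\rho)$ denotes its closed $\rho$-neighborhood. Homology has coefficients in $\mathbb{Z}/2\mathbb{Z}$. A filling of a compactly supported singular $k$-cycle $\eta$ is a singular $(k+1)$-chain $\Gamma$ in $\mathbb{R}^d$ with $\partial\Gamma=\eta$; the filling radius is $R_{fill}(\eta)=\inf\{\rho>0:\exists\,\Gamma\text{ with }\partial\Gamma=\eta\text{ and }\Gamma\subset\mathcal{U}(\eta,\rho)\}$ (chains identified with the union of images of their simplices). The death time $\eta_{death}$ is, in the filtration $\{\mathcal{U}(\mathcal{P},s)\}_{s\ge0}$, the smallest $s\ge r$ at which the class of (the image of) $\eta$ becomes trivial in $H_k(\mathcal{U}(\mathcal{P},s))$. *)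

theory Defs
  imports "HOL-Analysis.Analysis" "HOL-Homology.Homology"
begin

text \<open>Singular chains with coefficients in Z/2Z: a Z/2 singular p-chain in a
  space X is a finite set of singular p-simplices (those with coefficient 1).\<close>

definition z2_chain :: "nat \<Rightarrow> 'a topology \<Rightarrow> ((nat \<Rightarrow> real) \<Rightarrow> 'a) set \<Rightarrow> bool" where
  "z2_chain p X C \<longleftrightarrow> finite C \<and> (\<forall>\<sigma>\<in>C. singular_simplex p X \<sigma>)"

definition z2_boundary :: "nat \<Rightarrow> ((nat \<Rightarrow> real) \<Rightarrow> 'a) set \<Rightarrow> ((nat \<Rightarrow> real) \<Rightarrow> 'a) set" where
  "z2_boundary p C =
     (if p = 0 then {}
      else {\<tau>. odd (card {(\<sigma>, i). \<sigma> \<in> C \<and> i \<le> p \<and> singular_face p i \<sigma> = \<tau>})})"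

definition z2_cycle :: "nat \<Rightarrow> 'a topology \<Rightarrow> ((nat \<Rightarrow> real) \<Rightarrow> 'a) set \<Rightarrow> bool" where
  "z2_cycle p X C \<longleftrightarrow> z2_chain p X C \<and> z2_boundary p C = {}"

definition z2_null_homologous :: "nat \<Rightarrow> 'a topology \<Rightarrow> ((nat \<Rightarrow> real) \<Rightarrow> 'a) set \<Rightarrow> bool" where
  "z2_null_homologous p X C \<longleftrightarrow>
     (\<exists>\<Gamma>. z2_chain (Suc p) X \<Gamma> \<and> z2_boundary (Suc p) \<Gamma> = C)"

definition chain_image :: "nat \<Rightarrow> ((nat \<Rightarrow> real) \<Rightarrow> 'a) set \<Rightarrow> 'a set" where
  "chain_image p C = (\<Union>\<sigma>\<in>C. \<sigma> ` standard_simplex p)"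

definition ball_union :: "'a::metric_space set \<Rightarrow> real \<Rightarrow> 'a set" where
  "ball_union S r = (\<Union>p\<in>S. cball p r)"

definition filling_radius :: "nat \<Rightarrow> ((nat \<Rightarrow> real) \<Rightarrow> 'a::euclidean_space) set \<Rightarrow> real" where
  "filling_radius k \<eta> =
     Inf {\<rho>. \<rho> > 0 \<and> (\<exists>\<Gamma>. z2_chain (Suc k) (top_of_set UNIV) \<Gamma> \<and>
                              z2_boundary (Suc k) \<Gamma> = \<eta> \<and>
                              chain_image (Suc k) \<Gamma> \<subseteq> ball_union (chain_image k \<eta>) \<rho>)}"

definition death_time :: "nat \<Rightarrow> 'a::euclidean_space set \<Rightarrow> real \<Rightarrow> ((nat \<Rightarrow> real) \<Rightarrow> 'a) set \<Rightarrow> real" where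
  "death_time k P r \<eta> =
     Inf {s. s \<ge> r \<and> z2_null_homologous k (top_of_set (ball_union P s)) \<eta>}"

end

theory Submission
  imports Defs
begin

lemma z2_chain_sub:
  "z2_chain p (top_of_set T) C \<longleftrightarrow> z2_chain p (top_of_set UNIV) C \<and> chain_image p C \<subseteq> T"
  by (auto simp: z2_chain_def chain_image_def singular_simplex_subtopology)

lemma ball_union_trans:
  "ball_union (ball_union A a) b \<subseteq> ball_union A (a + b)"
proof
  fix x assume "x \<in> ball_union (ball_union A a) b"
  then obtain y p where "p \<in> A" "dist p y \<le> a" "dist y x \<le> b"
    by (auto simp: ball_union_def)
  then have "dist p x \<le> a + b" using dist_triangle[of p x y]
    by (simp add: dist_commute)
  then show "x \<in> ball_union A (a + b)" using \<open>p \<in> A\<close> by (auto simp: ball_union_def)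
qed

lemma ball_union_mono: "A \<subseteq> B \<Longrightarrow> ball_union A a \<subseteq> ball_union B a"
  by (auto simp: ball_union_def)

lemma ball_union_bounded:
  fixes P :: "'a::euclidean_space set"
  assumes "finite P"
  shows "\<exists>M. ball_union P s \<subseteq> cball 0 M"
proof -
  have "bounded P" using assms by (simp add: finite_imp_bounded)
  then obtain B where B: "\<And>x. x \<in> P \<Longrightarrow> norm x \<le> B" by (auto simp: bounded_iff)
  have "ball_union P s \<subseteq> cball 0 (B + s)"
  proof
    fix x assume "x \<in> ball_union P s"
    then obtain p where "p \<in> P" "dist p x \<le> s" by (auto simp: ball_union_def)
    then have "norm x \<le> B + s" using B[of p] norm_triangle_ineq[of p "x - p"]
      by (simp add: dist_norm norm_minus_commute)
    then show "x \<in> cball 0 (B + s)" by simp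
  qed
  then show ?thesis by blast
qed

theorem lemma6p6:
  fixes P :: "'a::euclidean_space set" and r R :: real and k :: nat
    and \<eta> :: "((nat \<Rightarrow> real) \<Rightarrow> 'a) set"
  assumes "finite P" and "r > 0"
    and "z2_cycle k (top_of_set (ball_union P r)) \<eta>"
    and "filling_radius k \<eta> = R"
  shows "death_time k P r \<eta> \<le> R + r"
proof -
  define F where "F = {\<rho>. \<rho> > 0 \<and> (\<exists>\<Gamma>. z2_chain (Suc k) (top_of_set UNIV) \<Gamma> \<and>
                              z2_boundary (Suc k) \<Gamma> = \<eta> \<and>
                              chain_image (Suc k) \<Gamma> \<subseteq> ball_union (chain_image k \<eta>) \<rho>)}"
  define S where "S = {s. s \<ge> r \<and> z2_null_homologous k (top_of_set (ball_union P s)) \<eta>}"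
  have R: "R = Inf F" using assms(4) by (simp add: filling_radius_def F_def)
  have D: "death_time k P r \<eta> = Inf S" by (simp add: death_time_def S_def)
  have etaim: "chain_image k \<eta> \<subseteq> ball_union P r"
    using assms(3) by (simp add: z2_cycle_def z2_chain_sub)
  have FS: "r + \<rho> \<in> S" if "\<rho> \<in> F" for \<rho>
  proof -
    from that obtain \<Gamma> where \<rho>: "\<rho> > 0" and G: "z2_chain (Suc k) (top_of_set UNIV) \<Gamma>"
      "z2_boundary (Suc k) \<Gamma> = \<eta>"
      "chain_image (Suc k) \<Gamma> \<subseteq> ball_union (chain_image k \<eta>) \<rho>"
      by (auto simp: F_def)
    have "chain_image (Suc k) \<Gamma> \<subseteq> ball_union P (r + \<rho>)"
      using G(3) ball_union_mono[OF etaim, of \<rho>] ball_union_trans[of P r \<rho>] by blast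
    then have "z2_chain (Suc k) (top_of_set (ball_union P (r + \<rho>))) \<Gamma>"
      using G(1) by (simp add: z2_chain_sub)
    then show ?thesis using G(2) \<rho> by (auto simp: S_def z2_null_homologous_def)
  qed
  show ?thesis
  proof (cases "F = {}")
    case True
    have "S = {}"
    proof (rule ccontr)
      assume "S \<noteq> {}"
      then obtain s \<Gamma> where G: "z2_chain (Suc k) (top_of_set (ball_union P s)) \<Gamma>"
        "z2_boundary (Suc k) \<Gamma> = \<eta>"
        by (auto simp: S_def z2_null_homologous_def)
      obtain M where M: "ball_union P s \<subseteq> cball 0 M" using ball_union_bounded[OF assms(1)] by blast
      have G1: "z2_chain (Suc k) (top_of_set UNIV) \<Gamma>" and G2: "chain_image (Suc k) \<Gamma> \<subseteq> cball 0 M"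
        using G(1) M by (auto simp: z2_chain_sub)
      show False
      proof (cases "chain_image k \<eta> = {}")
        case True
        then have "\<eta> = {} \<or> standard_simplex k = {}" by (auto simp: chain_image_def)
        moreover have "standard_simplex k \<noteq> {}" by (simp add: nonempty_standard_simplex)
        ultimately have "\<eta> = {}" by blast
        then have "1 \<in> F" unfolding F_def
          by (intro CollectI conjI exI[of _ "{}"])
             (auto simp: z2_chain_def z2_boundary_def chain_image_def)
        then show False using \<open>F = {}\<close> by blast
      next
        case False
        then obtain x0 where x0: "x0 \<in> chain_image k \<eta>" by blast
        define \<rho> where "\<rho> = norm x0 + \<bar>M\<bar> + 1"
        have "cball 0 M \<subseteq> ball_union (chain_image k \<eta>) \<rho>"
        proof
          fix x assume "x \<in> cball (0::'a) M"
          then have "norm x \<le> M" by simp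
          then have "dist x0 x \<le> \<rho>" unfolding \<rho>_def dist_norm
            using norm_triangle_ineq4[of x0 x] by linarith
          then show "x \<in> ball_union (chain_image k \<eta>) \<rho>"
            using x0 by (auto simp: ball_union_def)
        qed
        moreover have "\<rho> > 0" unfolding \<rho>_def by (simp add: add_nonneg_pos)
        ultimately have "\<rho> \<in> F" using G1 G(2) G2 unfolding F_def by blast
        then show False using \<open>F = {}\<close> by blast
      qed
    qed
    then show ?thesis using R D True \<open>r > 0\<close> by simp
  next
    case False
    then obtain \<rho>0 where "\<rho>0 \<in> F" by blast
    have Sne: "S \<noteq> {}" using FS[OF \<open>\<rho>0 \<in> F\<close>] by blast
    have Sbdd: "bdd_below S" by (auto simp: S_def bdd_below_def)
    have "Inf S - r \<le> Inf F"
    proof (rule cInf_greatest[OF False])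
      fix \<rho> assume "\<rho> \<in> F"
      then have "Inf S \<le> r + \<rho>" using cInf_lower[OF FS Sbdd] by blast
      then show "Inf S - r \<le> \<rho>" by simp
    qed
    then show ?thesis using R D by simp
  qed
qed

end
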